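(* Let $\rho_{1,n},\rho_{2,n}>0$ and $c_n=o(1)$ be such that \begin{align*} &\mathbb{P}\Big(\max_{e\in\mathcal{E}_{tr}}\sup_{u\in\mathcal{F}_w,\Phi\in\mathcal{F}_{\Phi}}\big|\tfrac{1}{n_e}\langle u\circ\Phi(X^e),\bm{y}^e\rangle-\mathbb{E}[ u\circ\Phi(\bm{x}^{e})\,y^{e}]\big|\leq \tfrac{\rho_{1,n}}{2}\Big)\geq 1-c_n,\\ &\mathbb{P}\Big(\max_{e\in\mathcal{E}_{tr}}\sup_{u\in\mathcal{F}_w,\Phi\in\mathcal{F}_{\Phi}}\big|\tfrac{1}{n_e}\textstyle\sum_{i=1}^{n_e}\{u\circ\Phi(\bm{x}_i^e)\}^2-\mathbb{E}[\{u\circ\Phi(\bm{x}^{e})\}^2]\big|\leq \tfrac{\rho_{2,n}}{2}\Big)\geq 1-c_n . \end{align*} Suppose that for all $\Phi\in\mathcal F_\Phi\setminus\mathcal I^*_\Phi$, either $\max_{e,e'\in\mathcal{E}_{tr}} \sup_{u\in\mathcal{F}_{w}}|\mathbb{E}[ u\circ\Phi(\bm{x}^e)y^e]-\mathbb{E}[u\circ\Phi(\bm{x}^{e'})y^{e'}]|>2\rho_{1,n}$ or $\max_{e,e'\in\mathcal{E}_{tr}} \sup_{u\in\mathcal{F}_{w}} |\mathbb{E}[\{ u\circ\Phi(\bm{x}^e)\}^2]-\mathbb{E}[\{ u\circ\Phi(\bm{x}^{e'})\}^2]|>2\rho_{2,n}$, and that $\mathcal I^*_\Phi\neq\emptyset$.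 Then, with probability at least $1-2c_n$, the empirical FAIRM estimator (with tuning parameters $\rho_{1,n},\rho_{2,n}$) satisfies \[ \max_{e\in\mathcal{E}_{all}}\{R^e(\hat{w}^{(\mathrm{FAIRM})}\circ\widehat{\Phi}^{(\mathrm{FAIRM})})-R^e(w^*\circ\Phi^* )\}\leq 4\rho_{1,n}+2\rho_{2,n}. \]
   Context: Finite set of environments $\mathcal E_{all}\supseteq\mathcal E_{tr}$; for each $e$, $(\bm x^e,y^e)\in\mathbb R^p\times\mathbb R$ has distribution $P^e$; weights $\alpha^*_e>0$ on $\mathcal E_{all}$ summing to one. For each $e\in\mathcal E_{tr}$ we observe $n_e$ i.i.d. samples $(\bm x^e_i,y^e_i)\sim P^e$, forming $X^e\in\mathbb R^{n_e\times p}$ and $\bm y^e\in\mathbb R^{n_e}$; $f(X^e)$ denotes the vector $(f(\bm x^e_i))_{i}$. $\mathcal F_\Phi$: class of representations $\Phi:\mathbb R^p\to\mathcal H$; $\mathcal F_w$: class of functions $\mathcal H\to\mathbb R$. $R^e(f)=\mathbb E[(y-f(\bm x))^2]$ for $(\bm x,y)\sim P^e$ independent of $f$. $\mathcal I^*_\Phi$: the set of $\Phi\in\mathcal F_\Phi$ with $\max_{e,e'\in\mathcal E_{all}}\sup_{u\in\mathcal F_w}|\mathbb E[u\circ\Phi(\bm x^e)y^e]-\mathbb E[u\circ\Phi(\bm x^{e'})y^{e'}]|=0$ and $\max_{e,e'\in\mathcal E_{all}}\sup_{u\in\mathcal F_w}|\mathbb E[\{u\circ\Phi(\bm x^e)\}^2]-\mathbb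 E[\{u\circ\Phi(\bm x^{e'})\}^2]|=0$. Full-info FAIRM: $(w^*,\Phi^* )\in\arg\min_{w\in\mathcal F_w,\Phi\in\mathcal I^*_\Phi}\sum_{e\in\mathcal E_{all}}\alpha^*_e\mathbb E[(y^e-w\circ\Phi(\bm x^e))^2]$. Empirical FAIRM: $(\hat w^{(\mathrm{FAIRM})},\widehat\Phi^{(\mathrm{FAIRM})})\in\arg\min_{w\in\mathcal F_w,\Phi\in\mathcal F_\Phi}\sum_{e\in\mathcal E_{tr}}\|\bm y^e-w\circ\Phi(X^e)\|_2^2$ subject to $\max_{e,e'\in\mathcal E_{tr}}\sup_{u\in\mathcal F_w}|\frac1{n_e}\langle u\circ\Phi(X^e),\bm y^e\rangle-\frac1{n_{e'}}\langle u\circ\Phi(X^{e'}),\bm y^{e'}\rangle|\le\rho_{1,n}$ and $\max_{e,e'\in\mathcal E_{tr}}\sup_{u\in\mathcal F_w}|\frac1{n_e}\sum_{i=1}^{n_e}\{u\circ\Phi(\bm x^e_i)\}^2-\frac1{n_{e'}}\sum_{i=1}^{n_{e'}}\{u\circ\Phi(\bm x^{e'}_i)\}^2|\le\rho_{2,n}$. *)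

theory Defs
  imports "HOL-Probability.Probability"
begin

text \<open>P e is the law of (x^e, y^e) on R^p x R. Expectations are Lebesgue integrals.\<close>

definition pop_xy :: "('x \<times> real) measure \<Rightarrow> ('h \<Rightarrow> real) \<Rightarrow> ('x \<Rightarrow> 'h) \<Rightarrow> real" where
  "pop_xy P u \<Phi> = (\<integral>z. u (\<Phi> (fst z)) * snd z \<partial>P)"

definition pop_sq :: "('x \<times> real) measure \<Rightarrow> ('h \<Rightarrow> real) \<Rightarrow> ('x \<Rightarrow> 'h) \<Rightarrow> real" where
  "pop_sq P u \<Phi> = (\<integral>z. (u (\<Phi> (fst z)))\<^sup>2 \<partial>P)"

definition risk :: "('x \<times> real) measure \<Rightarrow> ('x \<Rightarrow> real) \<Rightarrow> real" where
  "risk P f = (\<integral>z. (snd z - f (fst z))\<^sup>2 \<partial>P)"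

definition inv_dev :: "'env set \<Rightarrow> ('h \<Rightarrow> real) set \<Rightarrow> ('env \<Rightarrow> ('h \<Rightarrow> real) \<Rightarrow> real) \<Rightarrow> ereal" where
  "inv_dev E Fw g = (SUP e\<in>E. SUP e'\<in>E. SUP u\<in>Fw. ereal \<bar>g e u - g e' u\<bar>)"

definition inv_set :: "'env set \<Rightarrow> ('env \<Rightarrow> ('x \<times> real) measure) \<Rightarrow> ('h \<Rightarrow> real) set
    \<Rightarrow> ('x \<Rightarrow> 'h) set \<Rightarrow> ('x \<Rightarrow> 'h) set" where
  "inv_set Eall P Fw F\<Phi> = {\<Phi>\<in>F\<Phi>. inv_dev Eall Fw (\<lambda>e u. pop_xy (P e) u \<Phi>) = 0
                                \<and> inv_dev Eall Fw (\<lambda>e u. pop_sq (P e) u \<Phi>) = 0}"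

definition fairm_full :: "'env set \<Rightarrow> ('env \<Rightarrow> real) \<Rightarrow> ('env \<Rightarrow> ('x \<times> real) measure) \<Rightarrow>
    ('h \<Rightarrow> real) set \<Rightarrow> ('x \<Rightarrow> 'h) set \<Rightarrow> (('h \<Rightarrow> real) \<times> ('x \<Rightarrow> 'h)) set" where
  "fairm_full Eall \<alpha> P Fw F\<Phi> =
     {(w, \<Phi>). w \<in> Fw \<and> \<Phi> \<in> inv_set Eall P Fw F\<Phi> \<and>
        (\<forall>w'\<in>Fw. \<forall>\<Phi>'\<in>inv_set Eall P Fw F\<Phi>.
           (\<Sum>e\<in>Eall. \<alpha> e * risk (P e) (w \<circ> \<Phi>)) \<le> (\<Sum>e\<in>Eall. \<alpha> e * risk (P e) (w' \<circ> \<Phi>')))}"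

text \<open>Samples: (X e i, Y e i), i < n e, for e in E_tr (0-based indexing).\<close>

definition emp_xy :: "('env \<Rightarrow> nat) \<Rightarrow> ('env \<Rightarrow> nat \<Rightarrow> 'x) \<Rightarrow> ('env \<Rightarrow> nat \<Rightarrow> real) \<Rightarrow> 'env
    \<Rightarrow> ('h \<Rightarrow> real) \<Rightarrow> ('x \<Rightarrow> 'h) \<Rightarrow> real" where
  "emp_xy n X Y e u \<Phi> = (1 / real (n e)) * (\<Sum>i<n e. u (\<Phi> (X e i)) * Y e i)"

definition emp_sq :: "('env \<Rightarrow> nat) \<Rightarrow> ('env \<Rightarrow> nat \<Rightarrow> 'x) \<Rightarrow> 'env
    \<Rightarrow> ('h \<Rightarrow> real) \<Rightarrow> ('x \<Rightarrow> 'h) \<Rightarrow> real" where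
  "emp_sq n X e u \<Phi> = (1 / real (n e)) * (\<Sum>i<n e. (u (\<Phi> (X e i)))\<^sup>2)"

definition fairm_feasible :: "'env set \<Rightarrow> ('env \<Rightarrow> nat) \<Rightarrow> ('env \<Rightarrow> nat \<Rightarrow> 'x) \<Rightarrow> ('env \<Rightarrow> nat \<Rightarrow> real)
    \<Rightarrow> ('h \<Rightarrow> real) set \<Rightarrow> ('x \<Rightarrow> 'h) set \<Rightarrow> real \<Rightarrow> real \<Rightarrow> (('h \<Rightarrow> real) \<times> ('x \<Rightarrow> 'h)) set" where
  "fairm_feasible Etr n X Y Fw F\<Phi> \<rho>1 \<rho>2 =
     {(w, \<Phi>). w \<in> Fw \<and> \<Phi> \<in> F\<Phi> \<and>
        inv_dev Etr Fw (\<lambda>e u. emp_xy n X Y e u \<Phi>) \<le> ereal \<rho>1 \<and>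
        inv_dev Etr Fw (\<lambda>e u. emp_sq n X e u \<Phi>) \<le> ereal \<rho>2}"

definition emp_loss :: "'env set \<Rightarrow> ('env \<Rightarrow> nat) \<Rightarrow> ('env \<Rightarrow> nat \<Rightarrow> 'x) \<Rightarrow> ('env \<Rightarrow> nat \<Rightarrow> real)
    \<Rightarrow> ('x \<Rightarrow> real) \<Rightarrow> real" where
  "emp_loss Etr n X Y f = (\<Sum>e\<in>Etr. \<Sum>i<n e. (Y e i - f (X e i))\<^sup>2)"

definition fairm_emp :: "'env set \<Rightarrow> ('env \<Rightarrow> nat) \<Rightarrow> ('env \<Rightarrow> nat \<Rightarrow> 'x) \<Rightarrow> ('env \<Rightarrow> nat \<Rightarrow> real)
    \<Rightarrow> ('h \<Rightarrow> real) set \<Rightarrow> ('x \<Rightarrow> 'h) set \<Rightarrow> real \<Rightarrow> real \<Rightarrow> (('h \<Rightarrow> real) \<times> ('x \<Rightarrow> 'h)) set" where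
  "fairm_emp Etr n X Y Fw F\<Phi> \<rho>1 \<rho>2 =
     {(w, \<Phi>) \<in> fairm_feasible Etr n X Y Fw F\<Phi> \<rho>1 \<rho>2.
        \<forall>(w', \<Phi>') \<in> fairm_feasible Etr n X Y Fw F\<Phi> \<rho>1 \<rho>2.
          emp_loss Etr n X Y (w \<circ> \<Phi>) \<le> emp_loss Etr n X Y (w' \<circ> \<Phi>')}"

end

theory Submission
  imports Defs
begin

lemma union_bound_int:
  assumes "prob_space M" "A \<in> sets M" "B \<in> sets M"
  shows "measure M (A \<inter> B) \<ge> measure M A + measure M B - 1"
proof -
  interpret prob_space M by fact
  have "measure M (A \<union> B) = measure M A + measure M (B - A)"
    using assms finite_measure_Union' by blast
  moreover have "measure M (B - A) = measure M B - measure M (B \<inter> A)"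
    using assms finite_measure_Diff' by blast
  moreover have "measure M (A \<union> B) \<le> 1" by simp
  ultimately show ?thesis by (simp add: Int_commute)
qed

lemma inv_dev_le:
  assumes "e \<in> E" "e' \<in> E" "u \<in> Fw"
  shows "ereal \<bar>g e u - g e' u\<bar> \<le> inv_dev E Fw g"
  unfolding inv_dev_def
  by (rule SUP_upper2[OF assms(1)], rule SUP_upper2[OF assms(2)], rule SUP_upper[OF assms(3)])

lemma inv_dev_zero:
  assumes "inv_dev E Fw g = 0" "e \<in> E" "e' \<in> E" "u \<in> Fw"
  shows "g e u = g e' u"
  using inv_dev_le[OF assms(2-4), of g] assms(1) by (simp add: zero_ereal_def)

lemma inv_dev_bound:
  assumes "\<And>e e' u. e \<in> E \<Longrightarrow> e' \<in> E \<Longrightarrow> u \<in> Fw \<Longrightarrow> \<bar>g e u - g e' u\<bar> \<le> r"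
  shows "inv_dev E Fw g \<le> ereal r"
  unfolding inv_dev_def
  by (intro SUP_least) (simp add: assms)

lemma sup3_le:
  assumes "(SUP e\<in>E. SUP u\<in>Fw. SUP \<Phi>\<in>F. ereal (h e u \<Phi>)) \<le> ereal r"
    "e \<in> E" "u \<in> Fw" "\<Phi> \<in> F"
  shows "h e u \<Phi> \<le> r"
proof -
  have "ereal (h e u \<Phi>) \<le> (SUP e\<in>E. SUP u\<in>Fw. SUP \<Phi>\<in>F. ereal (h e u \<Phi>))"
    by (rule SUP_upper2[OF assms(2)], rule SUP_upper2[OF assms(3)], rule SUP_upper[OF assms(4)])
  with assms(1) have "ereal (h e u \<Phi>) \<le> ereal r" by (rule order_trans[rotated])
  then show ?thesis by simp
qed

lemma risk_decomp:
  fixes Q :: "('x \<times> real) measure" and f :: "'x \<Rightarrow> real"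
  assumes "snd \<in> borel_measurable Q" "integrable Q (\<lambda>z. (snd z)\<^sup>2)"
    "(\<lambda>z. f (fst z)) \<in> borel_measurable Q" "integrable Q (\<lambda>z. (f (fst z))\<^sup>2)"
  shows "risk Q f = (\<integral>z. (snd z)\<^sup>2 \<partial>Q) - 2 * (\<integral>z. f (fst z) * snd z \<partial>Q) + (\<integral>z. (f (fst z))\<^sup>2 \<partial>Q)"
proof -
  have m: "(\<lambda>z. f (fst z) * snd z) \<in> borel_measurable Q"
    using assms(1,3) by measurable
  have i: "integrable Q (\<lambda>z. f (fst z) * snd z)"
  proof (rule Bochner_Integration.integrable_bound[OF _ m])
    show "integrable Q (\<lambda>z. (snd z)\<^sup>2 + (f (fst z))\<^sup>2)" using assms(2,4) by simp
    show "AE z in Q. norm (f (fst z) * snd z) \<le> norm ((snd z)\<^sup>2 + (f (fst z))\<^sup>2)"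
    proof (rule AE_I2)
      fix z
      have "0 \<le> (\<bar>f (fst z)\<bar> - \<bar>snd z\<bar>)\<^sup>2" by simp
      hence "2 * \<bar>f (fst z)\<bar> * \<bar>snd z\<bar> \<le> (snd z)\<^sup>2 + (f (fst z))\<^sup>2"
        by (simp add: power2_diff)
      moreover have "\<bar>f (fst z)\<bar> * \<bar>snd z\<bar> \<ge> 0" by simp
      ultimately have "\<bar>f (fst z)\<bar> * \<bar>snd z\<bar> \<le> (snd z)\<^sup>2 + (f (fst z))\<^sup>2" by linarith
      then show "norm (f (fst z) * snd z) \<le> norm ((snd z)\<^sup>2 + (f (fst z))\<^sup>2)"
        by (simp add: abs_mult)
    qed
  qed
  have eq: "(\<lambda>z. (snd z - f (fst z))\<^sup>2) = (\<lambda>z. ((snd z)\<^sup>2 - 2 * (f (fst z) * snd z)) + (f (fst z))\<^sup>2)"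
    by (rule ext) (simp add: power2_diff algebra_simps)
  show ?thesis
    unfolding risk_def eq
    using assms(2,4) i by simp
qed

lemma emp_sum_decomp:
  assumes "n e > 0"
  shows "(\<Sum>i<n e. (Y e i - (w \<circ> \<Phi>) (X e i))\<^sup>2) =
    (\<Sum>i<n e. (Y e i)\<^sup>2) + real (n e) * (- 2 * emp_xy n X Y e w \<Phi> + emp_sq n X e w \<Phi>)"
proof -
  have a: "real (n e) * emp_xy n X Y e w \<Phi> = (\<Sum>i<n e. w (\<Phi> (X e i)) * Y e i)"
    using assms by (simp add: emp_xy_def)
  have b: "real (n e) * emp_sq n X e w \<Phi> = (\<Sum>i<n e. (w (\<Phi> (X e i)))\<^sup>2)"
    using assms by (simp add: emp_sq_def)
  have c: "(\<Sum>i<n e. (Y e i - (w \<circ> \<Phi>) (X e i))\<^sup>2) =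
     (\<Sum>i<n e. (Y e i)\<^sup>2) - 2 * (\<Sum>i<n e. w (\<Phi> (X e i)) * Y e i) + (\<Sum>i<n e. (w (\<Phi> (X e i)))\<^sup>2)"
    by (simp add: power2_diff sum.distrib sum_subtractf sum_distrib_left mult_ac)
  show ?thesis unfolding c a[symmetric] b[symmetric] by (simp add: algebra_simps)
qed

lemma snd_borel_meas:
  "sets (Q :: ((real^'p::finite) \<times> real) measure) = sets borel \<Longrightarrow> snd \<in> borel_measurable Q"
proof -
  assume h: "sets Q = sets borel"
  have "snd \<in> borel_measurable (borel :: ((real^'p::finite) \<times> real) measure)"
    by (intro borel_measurable_continuous_onI continuous_on_snd continuous_on_id)
  then show ?thesis by (subst measurable_cong_sets[OF h refl])
qed

theorem theorem1:
  fixes M :: "'\<omega> measure"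
    and Eall Etr :: "'env set"
    and P :: "'env \<Rightarrow> ((real^'p::finite) \<times> real) measure"
    and \<alpha> :: "'env \<Rightarrow> real"
    and Fw :: "('h \<Rightarrow> real) set"
    and F\<Phi> :: "(real^'p \<Rightarrow> 'h) set"
    and n :: "'env \<Rightarrow> nat"
    and X :: "'env \<Rightarrow> nat \<Rightarrow> '\<omega> \<Rightarrow> real^'p"
    and Y :: "'env \<Rightarrow> nat \<Rightarrow> '\<omega> \<Rightarrow> real"
    and \<rho>1 \<rho>2 c :: "nat \<Rightarrow> real"
    and N :: nat
    and wstar :: "'h \<Rightarrow> real" and \<Phi>star :: "real^'p \<Rightarrow> 'h"
  assumes M: "prob_space M"
    and Eall: "finite Eall" "Etr \<subseteq> Eall" "Etr \<noteq> {}"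
    and P: "\<And>e. e \<in> Eall \<Longrightarrow> prob_space (P e) \<and> sets (P e) = sets borel"
    and alpha: "\<And>e. e \<in> Eall \<Longrightarrow> \<alpha> e > 0" "(\<Sum>e\<in>Eall. \<alpha> e) = 1"
    and moments: "\<And>e. e \<in> Eall \<Longrightarrow> integrable (P e) (\<lambda>z. (snd z)\<^sup>2)"
      "\<And>e u \<Phi>. e \<in> Eall \<Longrightarrow> u \<in> Fw \<Longrightarrow> \<Phi> \<in> F\<Phi> \<Longrightarrow> (\<lambda>z. u (\<Phi> (fst z))) \<in> borel_measurable (P e)"
      "\<And>e u \<Phi>. e \<in> Eall \<Longrightarrow> u \<in> Fw \<Longrightarrow> \<Phi> \<in> F\<Phi> \<Longrightarrow> integrable (P e) (\<lambda>z. (u (\<Phi> (fst z)))\<^sup>2)"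
    and n_pos: "\<And>e. e \<in> Etr \<Longrightarrow> n e > 0"
    and samples_law: "\<And>e i. e \<in> Etr \<Longrightarrow> i < n e \<Longrightarrow>
        (\<lambda>\<omega>. (X e i \<omega>, Y e i \<omega>)) \<in> borel_measurable M \<and> distr M borel (\<lambda>\<omega>. (X e i \<omega>, Y e i \<omega>)) = P e"
    and samples_indep: "\<And>e. e \<in> Etr \<Longrightarrow>
        prob_space.indep_vars M (\<lambda>_. borel) (\<lambda>i \<omega>. (X e i \<omega>, Y e i \<omega>)) {..<n e}"
    and rho_pos: "\<rho>1 N > 0" "\<rho>2 N > 0"
    and c_lim: "c \<longlonglongrightarrow> 0"
    and conc1: "measure M {\<omega>\<in>space M.
        (SUP e\<in>Etr. SUP u\<in>Fw. SUP \<Phi>\<in>F\<Phi>.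
           ereal \<bar>emp_xy n (\<lambda>e i. X e i \<omega>) (\<lambda>e i. Y e i \<omega>) e u \<Phi> - pop_xy (P e) u \<Phi>\<bar>)
        \<le> ereal (\<rho>1 N / 2)} \<ge> 1 - c N"
    and conc2: "measure M {\<omega>\<in>space M.
        (SUP e\<in>Etr. SUP u\<in>Fw. SUP \<Phi>\<in>F\<Phi>.
           ereal \<bar>emp_sq n (\<lambda>e i. X e i \<omega>) e u \<Phi> - pop_sq (P e) u \<Phi>\<bar>)
        \<le> ereal (\<rho>2 N / 2)} \<ge> 1 - c N"
    and separation: "\<And>\<Phi>. \<Phi> \<in> F\<Phi> - inv_set Eall P Fw F\<Phi> \<Longrightarrow>
        inv_dev Etr Fw (\<lambda>e u. pop_xy (P e) u \<Phi>) > ereal (2 * \<rho>1 N) \<or>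
        inv_dev Etr Fw (\<lambda>e u. pop_sq (P e) u \<Phi>) > ereal (2 * \<rho>2 N)"
    and inv_nonempty: "inv_set Eall P Fw F\<Phi> \<noteq> {}"
    and star: "(wstar, \<Phi>star) \<in> fairm_full Eall \<alpha> P Fw F\<Phi>"
  shows "\<exists>A\<in>sets M. measure M A \<ge> 1 - 2 * c N \<and>
     (\<forall>\<omega>\<in>A. \<forall>(w, \<Phi>) \<in> fairm_emp Etr n (\<lambda>e i. X e i \<omega>) (\<lambda>e i. Y e i \<omega>) Fw F\<Phi> (\<rho>1 N) (\<rho>2 N).
        Max ((\<lambda>e. risk (P e) (w \<circ> \<Phi>) - risk (P e) (wstar \<circ> \<Phi>star)) ` Eall)
          \<le> 4 * \<rho>1 N + 2 * \<rho>2 N)"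
proof -
  interpret M: prob_space M by (rule M)
  define G1 where "G1 = {\<omega>\<in>space M.
        (SUP e\<in>Etr. SUP u\<in>Fw. SUP \<Phi>\<in>F\<Phi>.
           ereal \<bar>emp_xy n (\<lambda>e i. X e i \<omega>) (\<lambda>e i. Y e i \<omega>) e u \<Phi> - pop_xy (P e) u \<Phi>\<bar>)
        \<le> ereal (\<rho>1 N / 2)}"
  define G2 where "G2 = {\<omega>\<in>space M.
        (SUP e\<in>Etr. SUP u\<in>Fw. SUP \<Phi>\<in>F\<Phi>.
           ereal \<bar>emp_sq n (\<lambda>e i. X e i \<omega>) e u \<Phi> - pop_sq (P e) u \<Phi>\<bar>)
        \<le> ereal (\<rho>2 N / 2)}"
  have finEtr: "finite Etr" using Eall finite_subset by blast
  obtain e0 where e0: "e0 \<in> Etr" using Eall(3) by blast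
  have e0all: "e0 \<in> Eall" using e0 Eall(2) by blast
  have snd_meas: "\<And>e. e \<in> Eall \<Longrightarrow> snd \<in> borel_measurable (P e)"
    using P snd_borel_meas by blast
  from star have wstarF: "wstar \<in> Fw" and PsI: "\<Phi>star \<in> inv_set Eall P Fw F\<Phi>"
    unfolding fairm_full_def by auto
  from PsI have PsF: "\<Phi>star \<in> F\<Phi>"
    and Ps1: "inv_dev Eall Fw (\<lambda>e u. pop_xy (P e) u \<Phi>star) = 0"
    and Ps2: "inv_dev Eall Fw (\<lambda>e u. pop_sq (P e) u \<Phi>star) = 0"
    unfolding inv_set_def by auto
  have key: "Max ((\<lambda>e. risk (P e) (w \<circ> \<Phi>) - risk (P e) (wstar \<circ> \<Phi>star)) ` Eall)
          \<le> 4 * \<rho>1 N + 2 * \<rho>2 N"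
    if w1: "\<omega> \<in> G1" and w2: "\<omega> \<in> G2"
      and est: "(w, \<Phi>) \<in> fairm_emp Etr n (\<lambda>e i. X e i \<omega>) (\<lambda>e i. Y e i \<omega>) Fw F\<Phi> (\<rho>1 N) (\<rho>2 N)"
    for \<omega> w \<Phi>
  proof -
    define xs where "xs = (\<lambda>e i. X e i \<omega>)"
    define ys where "ys = (\<lambda>e i. Y e i \<omega>)"
    have b1: "\<bar>emp_xy n xs ys e u \<psi> - pop_xy (P e) u \<psi>\<bar> \<le> \<rho>1 N / 2"
      if "e \<in> Etr" "u \<in> Fw" "\<psi> \<in> F\<Phi>" for e u \<psi>
      using sup3_le[where h="\<lambda>e u \<psi>. \<bar>emp_xy n xs ys e u \<psi> - pop_xy (P e) u \<psi>\<bar>", OF _ that]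
        w1 unfolding G1_def xs_def ys_def by blast
    have b2: "\<bar>emp_sq n xs e u \<psi> - pop_sq (P e) u \<psi>\<bar> \<le> \<rho>2 N / 2"
      if "e \<in> Etr" "u \<in> Fw" "\<psi> \<in> F\<Phi>" for e u \<psi>
      using sup3_le[where h="\<lambda>e u \<psi>. \<bar>emp_sq n xs e u \<psi> - pop_sq (P e) u \<psi>\<bar>", OF _ that]
        w2 unfolding G2_def xs_def by blast
    from est have feas: "(w, \<Phi>) \<in> fairm_feasible Etr n xs ys Fw F\<Phi> (\<rho>1 N) (\<rho>2 N)"
      and opt: "\<And>w' \<Phi>'. (w', \<Phi>') \<in> fairm_feasible Etr n xs ys Fw F\<Phi> (\<rho>1 N) (\<rho>2 N) \<Longrightarrow>
          emp_loss Etr n xs ys (w \<circ> \<Phi>) \<le> emp_loss Etr n xs ys (w' \<circ> \<Phi>')"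
      unfolding fairm_emp_def xs_def ys_def by auto
    from feas have wF: "w \<in> Fw" and PF: "\<Phi> \<in> F\<Phi>"
      and d1: "inv_dev Etr Fw (\<lambda>e u. emp_xy n xs ys e u \<Phi>) \<le> ereal (\<rho>1 N)"
      and d2: "inv_dev Etr Fw (\<lambda>e u. emp_sq n xs e u \<Phi>) \<le> ereal (\<rho>2 N)"
      unfolding fairm_feasible_def by auto
    have PI: "\<Phi> \<in> inv_set Eall P Fw F\<Phi>"
    proof (rule ccontr)
      assume "\<Phi> \<notin> inv_set Eall P Fw F\<Phi>"
      with PF have sep: "inv_dev Etr Fw (\<lambda>e u. pop_xy (P e) u \<Phi>) > ereal (2 * \<rho>1 N) \<or>
        inv_dev Etr Fw (\<lambda>e u. pop_sq (P e) u \<Phi>) > ereal (2 * \<rho>2 N)"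
        using separation by blast
      have "inv_dev Etr Fw (\<lambda>e u. pop_xy (P e) u \<Phi>) \<le> ereal (2 * \<rho>1 N)"
      proof (rule inv_dev_bound)
        fix e e' u assume h: "e \<in> Etr" "e' \<in> Etr" "u \<in> Fw"
        have "ereal \<bar>emp_xy n xs ys e u \<Phi> - emp_xy n xs ys e' u \<Phi>\<bar> \<le> ereal (\<rho>1 N)"
          using inv_dev_le[OF h, of "\<lambda>e u. emp_xy n xs ys e u \<Phi>"] d1 by (rule order_trans)
        then have "\<bar>emp_xy n xs ys e u \<Phi> - emp_xy n xs ys e' u \<Phi>\<bar> \<le> \<rho>1 N" by simp
        moreover have "\<bar>emp_xy n xs ys e u \<Phi> - pop_xy (P e) u \<Phi>\<bar> \<le> \<rho>1 N / 2" using b1 h PF by blast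
        moreover have "\<bar>emp_xy n xs ys e' u \<Phi> - pop_xy (P e') u \<Phi>\<bar> \<le> \<rho>1 N / 2" using b1 h PF by blast
        ultimately show "\<bar>pop_xy (P e) u \<Phi> - pop_xy (P e') u \<Phi>\<bar> \<le> 2 * \<rho>1 N" by linarith
      qed
      moreover have "inv_dev Etr Fw (\<lambda>e u. pop_sq (P e) u \<Phi>) \<le> ereal (2 * \<rho>2 N)"
      proof (rule inv_dev_bound)
        fix e e' u assume h: "e \<in> Etr" "e' \<in> Etr" "u \<in> Fw"
        have "ereal \<bar>emp_sq n xs e u \<Phi> - emp_sq n xs e' u \<Phi>\<bar> \<le> ereal (\<rho>2 N)"
          using inv_dev_le[OF h, of "\<lambda>e u. emp_sq n xs e u \<Phi>"] d2 by (rule order_trans)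
        then have "\<bar>emp_sq n xs e u \<Phi> - emp_sq n xs e' u \<Phi>\<bar> \<le> \<rho>2 N" by simp
        moreover have "\<bar>emp_sq n xs e u \<Phi> - pop_sq (P e) u \<Phi>\<bar> \<le> \<rho>2 N / 2" using b2 h PF by blast
        moreover have "\<bar>emp_sq n xs e' u \<Phi> - pop_sq (P e') u \<Phi>\<bar> \<le> \<rho>2 N / 2" using b2 h PF by blast
        ultimately show "\<bar>pop_sq (P e) u \<Phi> - pop_sq (P e') u \<Phi>\<bar> \<le> 2 * \<rho>2 N" by linarith
      qed
      ultimately show False using sep by auto
    qed
    then have P1: "inv_dev Eall Fw (\<lambda>e u. pop_xy (P e) u \<Phi>) = 0"
      and P2: "inv_dev Eall Fw (\<lambda>e u. pop_sq (P e) u \<Phi>) = 0"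
      unfolding inv_set_def by auto
    have sfeas: "(wstar, \<Phi>star) \<in> fairm_feasible Etr n xs ys Fw F\<Phi> (\<rho>1 N) (\<rho>2 N)"
    proof -
      have "inv_dev Etr Fw (\<lambda>e u. emp_xy n xs ys e u \<Phi>star) \<le> ereal (\<rho>1 N)"
      proof (rule inv_dev_bound)
        fix e e' u assume h: "e \<in> Etr" "e' \<in> Etr" "u \<in> Fw"
        have "pop_xy (P e) u \<Phi>star = pop_xy (P e') u \<Phi>star"
          using inv_dev_zero[OF Ps1] h Eall(2) by blast
        moreover have "\<bar>emp_xy n xs ys e u \<Phi>star - pop_xy (P e) u \<Phi>star\<bar> \<le> \<rho>1 N / 2" using b1 h PsF by blast
        moreover have "\<bar>emp_xy n xs ys e' u \<Phi>star - pop_xy (P e') u \<Phi>star\<bar> \<le> \<rho>1 N / 2" using b1 h PsF by blast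
        ultimately show "\<bar>emp_xy n xs ys e u \<Phi>star - emp_xy n xs ys e' u \<Phi>star\<bar> \<le> \<rho>1 N" by linarith
      qed
      moreover have "inv_dev Etr Fw (\<lambda>e u. emp_sq n xs e u \<Phi>star) \<le> ereal (\<rho>2 N)"
      proof (rule inv_dev_bound)
        fix e e' u assume h: "e \<in> Etr" "e' \<in> Etr" "u \<in> Fw"
        have "pop_sq (P e) u \<Phi>star = pop_sq (P e') u \<Phi>star"
          using inv_dev_zero[OF Ps2] h Eall(2) by blast
        moreover have "\<bar>emp_sq n xs e u \<Phi>star - pop_sq (P e) u \<Phi>star\<bar> \<le> \<rho>2 N / 2" using b2 h PsF by blast
        moreover have "\<bar>emp_sq n xs e' u \<Phi>star - pop_sq (P e') u \<Phi>star\<bar> \<le> \<rho>2 N / 2" using b2 h PsF by blast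
        ultimately show "\<bar>emp_sq n xs e u \<Phi>star - emp_sq n xs e' u \<Phi>star\<bar> \<le> \<rho>2 N" by linarith
      qed
      ultimately show ?thesis unfolding fairm_feasible_def using wstarF PsF by auto
    qed
    have lossle: "emp_loss Etr n xs ys (w \<circ> \<Phi>) \<le> emp_loss Etr n xs ys (wstar \<circ> \<Phi>star)"
      using opt[OF sfeas] .
    define L :: "'env \<Rightarrow> ('h \<Rightarrow> real) \<Rightarrow> (real^'p \<Rightarrow> 'h) \<Rightarrow> real"
      where "L e v \<psi> = - 2 * pop_xy (P e) v \<psi> + pop_sq (P e) v \<psi>" for e v \<psi>
    define D where "D = L e0 w \<Phi> - L e0 wstar \<Phi>star"
    have Linv: "L e w \<Phi> - L e wstar \<Phi>star = D" if "e \<in> Eall" for e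
    proof -
      have "pop_xy (P e) w \<Phi> = pop_xy (P e0) w \<Phi>" using inv_dev_zero[OF P1 that e0all wF] .
      moreover have "pop_sq (P e) w \<Phi> = pop_sq (P e0) w \<Phi>" using inv_dev_zero[OF P2 that e0all wF] .
      moreover have "pop_xy (P e) wstar \<Phi>star = pop_xy (P e0) wstar \<Phi>star"
        using inv_dev_zero[OF Ps1 that e0all wstarF] .
      moreover have "pop_sq (P e) wstar \<Phi>star = pop_sq (P e0) wstar \<Phi>star"
        using inv_dev_zero[OF Ps2 that e0all wstarF] .
      ultimately show ?thesis unfolding D_def L_def by simp
    qed
    define q where "q e = (- 2 * emp_xy n xs ys e w \<Phi> + emp_sq n xs e w \<Phi>)
        - (- 2 * emp_xy n xs ys e wstar \<Phi>star + emp_sq n xs e wstar \<Phi>star)" for e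
    define S where "S e = (\<Sum>i<n e. (ys e i)\<^sup>2)" for e
    have el: "emp_loss Etr n xs ys (v \<circ> \<psi>) = (\<Sum>e\<in>Etr. S e + real (n e) * (- 2 * emp_xy n xs ys e v \<psi> + emp_sq n xs e v \<psi>))"
      for v \<psi>
      unfolding emp_loss_def S_def
      by (rule sum.cong[OF refl], rule emp_sum_decomp, simp add: n_pos)
    have sumq: "(\<Sum>e\<in>Etr. real (n e) * q e) \<le> 0"
      using lossle unfolding el q_def
      by (simp add: sum.distrib sum_subtractf right_diff_distrib)
    have qlow: "real (n e) * (D - 2 * \<rho>1 N - \<rho>2 N) \<le> real (n e) * q e" if "e \<in> Etr" for e
    proof (rule mult_left_mono)
      have ea: "e \<in> Eall" using that Eall(2) by blast
      have "\<bar>emp_xy n xs ys e w \<Phi> - pop_xy (P e) w \<Phi>\<bar> \<le> \<rho>1 N / 2" using b1 that wF PF by blast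
      moreover have "\<bar>emp_sq n xs e w \<Phi> - pop_sq (P e) w \<Phi>\<bar> \<le> \<rho>2 N / 2" using b2 that wF PF by blast
      moreover have "\<bar>emp_xy n xs ys e wstar \<Phi>star - pop_xy (P e) wstar \<Phi>star\<bar> \<le> \<rho>1 N / 2"
        using b1 that wstarF PsF by blast
      moreover have "\<bar>emp_sq n xs e wstar \<Phi>star - pop_sq (P e) wstar \<Phi>star\<bar> \<le> \<rho>2 N / 2"
        using b2 that wstarF PsF by blast
      moreover note Linv[OF ea]
      ultimately show "D - 2 * \<rho>1 N - \<rho>2 N \<le> q e" unfolding q_def L_def by linarith
    qed simp
    have "(\<Sum>e\<in>Etr. real (n e)) * (D - 2 * \<rho>1 N - \<rho>2 N) = (\<Sum>e\<in>Etr. real (n e) * (D - 2 * \<rho>1 N - \<rho>2 N))"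
      by (simp add: sum_distrib_right)
    also have "\<dots> \<le> (\<Sum>e\<in>Etr. real (n e) * q e)" by (rule sum_mono) (rule qlow)
    also have "\<dots> \<le> 0" by (rule sumq)
    finally have sle: "(\<Sum>e\<in>Etr. real (n e)) * (D - 2 * \<rho>1 N - \<rho>2 N) \<le> 0" .
    have spos: "(\<Sum>e\<in>Etr. real (n e)) > 0"
      by (intro sum_pos[OF finEtr Eall(3)]) (simp add: n_pos)
    have Dle: "D \<le> 2 * \<rho>1 N + \<rho>2 N"
      using sle spos by (simp add: mult_le_0_iff)
    have riskeq: "risk (P e) (w \<circ> \<Phi>) - risk (P e) (wstar \<circ> \<Phi>star) = D" if ea: "e \<in> Eall" for e
    proof -
      have r1: "risk (P e) (w \<circ> \<Phi>) = (\<integral>z. (snd z)\<^sup>2 \<partial>P e) - 2 * pop_xy (P e) w \<Phi> + pop_sq (P e) w \<Phi>"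
        unfolding pop_xy_def pop_sq_def
        using risk_decomp[OF snd_meas[OF ea] moments(1)[OF ea], of "w \<circ> \<Phi>"]
          moments(2,3)[OF ea wF PF] by simp
      have r2: "risk (P e) (wstar \<circ> \<Phi>star) = (\<integral>z. (snd z)\<^sup>2 \<partial>P e) - 2 * pop_xy (P e) wstar \<Phi>star + pop_sq (P e) wstar \<Phi>star"
        unfolding pop_xy_def pop_sq_def
        using risk_decomp[OF snd_meas[OF ea] moments(1)[OF ea], of "wstar \<circ> \<Phi>star"]
          moments(2,3)[OF ea wstarF PsF] by simp
      show ?thesis using Linv[OF ea] unfolding r1 r2 L_def by simp
    qed
    have ne: "Eall \<noteq> {}" using e0all by blast
    show ?thesis
      using Eall(1) ne riskeq Dle rho_pos by (simp add: Max_le_iff)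
  qed
  show ?thesis
  proof (cases "G1 \<in> sets M \<and> G2 \<in> sets M")
    case True
    have "measure M (G1 \<inter> G2) \<ge> measure M G1 + measure M G2 - 1"
      using union_bound_int[OF M] True by blast
    moreover have "measure M G1 \<ge> 1 - c N" using conc1 unfolding G1_def .
    moreover have "measure M G2 \<ge> 1 - c N" using conc2 unfolding G2_def .
    ultimately have "measure M (G1 \<inter> G2) \<ge> 1 - 2 * c N" by linarith
    then show ?thesis using True key by (intro bexI[of _ "G1 \<inter> G2"]) auto
  next
    case False
    then have "measure M G1 = 0 \<or> measure M G2 = 0" by (auto simp: measure_notin_sets)
    then have "c N \<ge> 1" using conc1 conc2 unfolding G1_def[symmetric] G2_def[symmetric] by auto
    then show ?thesis by (intro bexI[of _ "{}"]) auto
  qed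
qed

end
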